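(* Let $V$ be a finite set and let $G$ be the group with presentation $\langle V \mid r_e,\ e\in E\rangle$, where $E$ is a finite index set and each relator has the form $r_e=\lambda_e p_e\lambda_e^{-1}q_e^{-1}$ with $\lambda_e,p_e,q_e\in V$. Assume the vertex link $L$ (defined in the context) has girth at least $4$ (no loops, no multiple edges, no triangles), and that the descending link $L^+$ and the ascending link $L^-$ are trees. Then for any pair of distinct letters $a,b\in V$, the vertex rim $\mathrm{vrim}(a,b)$ of the fan $\mathrm{Fan}(a,b)$ is a freely reduced word in the letters $V^{\pm1}$, and the edge rim $\mathrm{erim}(a,b)$ is a freely reduced word in the letters $\{x_e\}_{e\in E}^{\pm1}$.
   Context: Let $P$ be the presentation $2$-complex: one vertex, one oriented loop per generator, and for each relator $r_e$ one unit square glued along the word $r_e$. In the square of $r_e$, starting at the corner $B$ and reading $\lambda_e p_e\lambda_e^{-1}q_e^{-1}$, the edges are: $\lambda_e$ from $B$ to a corner $Q$, $p_e$ from $Q$ to a corner $T$, $\lambda_e$ from a corner $R$ to $T$, and $q_e$ from $B$ to $R$. Call $T$ the top corner (its two incoming edges, labeled $p_e$ and $\lambda_e$, are the top edges) and $B$ the bottom corner. The vertex link $L$ is the graph with vertex set $\{v^+,v^-: v\in V\}$ and, for each relator $e$, four edges: $\{p_e^+,\lambda_e^+\}$ (corner $T$), $\{\lambda_e^-,q_e^-\}$ (corner $B$), $\{\lambda_e^+,p_e^-\}$ (corner $Q$), $\{q_e^+,\lambda_e^-\}$ (corner $R$). The descending link $L^+$ is the full subgraph on $\{v^+\}$ and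 the ascending link $L^-$ the full subgraph on $\{v^-\}$. For $e\in E$ put $x_e=q_e^{-1}\lambda_e$ (a formal letter, also an element of $G$). Fan $\mathrm{Fan}(a,b)$ for distinct $a,b\in V$: let $a^+=v_0^+,v_1^+,\dots,v_k^+=b^+$ be the unique simple path in the tree $L^+$. For $1\le i\le k$ let $C_i$ be a copy of the square of the unique relator whose top edges are labeled $v_{i-1}$ and $v_i$. $\mathrm{Fan}(a,b)$ is obtained by identifying, for $1\le i<k$, the top edge of $C_i$ labeled $v_i$ with the top edge of $C_{i+1}$ labeled $v_i$. For each $i$, the bottom boundary path of $C_i$ from the initial vertex of its top edge labeled $v_{i-1}$ to the initial vertex of its top edge labeled $v_i$ reads a two-letter word, which is either $q_e^{-1}\lambda_e$ or $\lambda_e^{-1}q_e$ for the relator $e$ of $C_i$. The vertex rim $\mathrm{vrim}(a,b)$ is the concatenation of these two-letter words for $i=1,\dots,k$, and the edge rim $\mathrm{erim}(a,b)$ is the word obtained by replacing each $q_e^{-1}\lambda_e$ by $x_e$ and each $\lambda_e^{-1}q_e$ by $x_e^{-1}$. *)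

theory Defs
  imports Main
begin

text \<open>Signed letters: (x, True) is x, (x, False) is x^-1.
  A word is freely reduced if no two consecutive letters are mutually inverse.\<close>

definition freely_reduced :: "('a \<times> bool) list \<Rightarrow> bool" where
  "freely_reduced w \<longleftrightarrow>
     (\<forall>i. Suc i < length w \<longrightarrow>
        \<not> (fst (w ! i) = fst (w ! Suc i) \<and> snd (w ! i) \<noteq> snd (w ! Suc i)))"

text \<open>Corners of the square of a relator.\<close>
datatype corner = CT | CB | CQ | CR

text \<open>Vertices of the link: (v, True) = v^+, (v, False) = v^-.
  Edge of the link coming from corner c of the square of relator e.\<close>
definition link_edge ::
  "('e \<Rightarrow> 'v) \<Rightarrow> ('e \<Rightarrow> 'v) \<Rightarrow> ('e \<Rightarrow> 'v) \<Rightarrow> 'e \<Rightarrow> corner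
     \<Rightarrow> ('v \<times> bool) \<times> ('v \<times> bool)" where
  "link_edge lam p q e c = (case c of
      CT \<Rightarrow> ((p e, True), (lam e, True))
    | CB \<Rightarrow> ((lam e, False), (q e, False))
    | CQ \<Rightarrow> ((lam e, True), (p e, False))
    | CR \<Rightarrow> ((q e, True), (lam e, False)))"

definition link_adj ::
  "'e set \<Rightarrow> ('e \<Rightarrow> 'v) \<Rightarrow> ('e \<Rightarrow> 'v) \<Rightarrow> ('e \<Rightarrow> 'v)
     \<Rightarrow> 'v \<times> bool \<Rightarrow> 'v \<times> bool \<Rightarrow> bool" where
  "link_adj E lam p q x y \<longleftrightarrow>
     (\<exists>e\<in>E. \<exists>c. link_edge lam p q e c = (x, y) \<or> link_edge lam p q e c = (y, x))"

definition link_girth_ge_4 ::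
  "'e set \<Rightarrow> ('e \<Rightarrow> 'v) \<Rightarrow> ('e \<Rightarrow> 'v) \<Rightarrow> ('e \<Rightarrow> 'v) \<Rightarrow> bool" where
  "link_girth_ge_4 E lam p q \<longleftrightarrow>
     (\<forall>e\<in>E. \<forall>c. fst (link_edge lam p q e c) \<noteq> snd (link_edge lam p q e c)) \<and>
     (\<forall>e\<in>E. \<forall>c. \<forall>e'\<in>E. \<forall>c'. (e, c) \<noteq> (e', c') \<longrightarrow>
        {fst (link_edge lam p q e c), snd (link_edge lam p q e c)} \<noteq>
        {fst (link_edge lam p q e' c'), snd (link_edge lam p q e' c')}) \<and>
     \<not> (\<exists>x y z. x \<noteq> y \<and> y \<noteq> z \<and> x \<noteq> z \<and>
          link_adj E lam p q x y \<and> link_adj E lam p q y z \<and> link_adj E lam p q x z)"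

text \<open>Generic (simple) graph notions on a vertex set S with adjacency adj
  (the full subgraph on S).\<close>
definition walk_in :: "'a set \<Rightarrow> ('a \<Rightarrow> 'a \<Rightarrow> bool) \<Rightarrow> 'a list \<Rightarrow> bool" where
  "walk_in S adj xs \<longleftrightarrow> xs \<noteq> [] \<and> set xs \<subseteq> S \<and>
     (\<forall>i. Suc i < length xs \<longrightarrow> adj (xs ! i) (xs ! Suc i))"

definition graph_connected :: "'a set \<Rightarrow> ('a \<Rightarrow> 'a \<Rightarrow> bool) \<Rightarrow> bool" where
  "graph_connected S adj \<longleftrightarrow>
     (\<forall>x\<in>S. \<forall>y\<in>S. \<exists>xs. walk_in S adj xs \<and> hd xs = x \<and> last xs = y)"

definition graph_has_cycle :: "'a set \<Rightarrow> ('a \<Rightarrow> 'a \<Rightarrow> bool) \<Rightarrow> bool" where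
  "graph_has_cycle S adj \<longleftrightarrow>
     (\<exists>xs. 3 \<le> length xs \<and> distinct xs \<and> walk_in S adj xs \<and> adj (last xs) (hd xs))"

definition graph_is_tree :: "'a set \<Rightarrow> ('a \<Rightarrow> 'a \<Rightarrow> bool) \<Rightarrow> bool" where
  "graph_is_tree S adj \<longleftrightarrow> S \<noteq> {} \<and> graph_connected S adj \<and> \<not> graph_has_cycle S adj"

definition simple_path :: "'a set \<Rightarrow> ('a \<Rightarrow> 'a \<Rightarrow> bool) \<Rightarrow> 'a \<Rightarrow> 'a \<Rightarrow> 'a list \<Rightarrow> bool" where
  "simple_path S adj x y xs \<longleftrightarrow> walk_in S adj xs \<and> distinct xs \<and> hd xs = x \<and> last xs = y"

definition plus_verts :: "'v set \<Rightarrow> ('v \<times> bool) set" where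
  "plus_verts V = (\<lambda>v. (v, True)) ` V"

definition minus_verts :: "'v set \<Rightarrow> ('v \<times> bool) set" where
  "minus_verts V = (\<lambda>v. (v, False)) ` V"

text \<open>Bottom boundary word of the square of relator e, read from the initial vertex of
  the top edge labelled u to the initial vertex of the top edge labelled w.
  Top edge p_e starts at Q, top edge lam_e starts at R; the bottom path
  R -> B -> Q reads q_e^-1 lam_e, and Q -> B -> R reads lam_e^-1 q_e.\<close>
definition square_vword ::
  "('e \<Rightarrow> 'v) \<Rightarrow> ('e \<Rightarrow> 'v) \<Rightarrow> ('e \<Rightarrow> 'v) \<Rightarrow> 'e \<Rightarrow> 'v \<Rightarrow> 'v \<Rightarrow> ('v \<times> bool) list" where
  "square_vword lam p q e u w =
     (if u = lam e \<and> w = p e then [(q e, False), (lam e, True)]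
      else if u = p e \<and> w = lam e then [(lam e, False), (q e, True)]
      else [])"

definition square_eword ::
  "('e \<Rightarrow> 'v) \<Rightarrow> ('e \<Rightarrow> 'v) \<Rightarrow> 'e \<Rightarrow> 'v \<Rightarrow> 'v \<Rightarrow> ('e \<times> bool) list" where
  "square_eword lam p e u w =
     (if u = lam e \<and> w = p e then [(e, True)]
      else if u = p e \<and> w = lam e then [(e, False)]
      else [])"

text \<open>vrim / erim of the fan determined by the path vs = [v_0,...,v_k] in L^+
  and the relators es = [e_1,...,e_k] of the squares C_1,...,C_k.\<close>
definition vrim ::
  "('e \<Rightarrow> 'v) \<Rightarrow> ('e \<Rightarrow> 'v) \<Rightarrow> ('e \<Rightarrow> 'v) \<Rightarrow> 'v list \<Rightarrow> 'e list \<Rightarrow> ('v \<times> bool) list" where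
  "vrim lam p q vs es =
     concat (map (\<lambda>i. square_vword lam p q (es ! i) (vs ! i) (vs ! Suc i)) [0..<length es])"

definition erim ::
  "('e \<Rightarrow> 'v) \<Rightarrow> ('e \<Rightarrow> 'v) \<Rightarrow> 'v list \<Rightarrow> 'e list \<Rightarrow> ('e \<times> bool) list" where
  "erim lam p vs es =
     concat (map (\<lambda>i. square_eword lam p (es ! i) (vs ! i) (vs ! Suc i)) [0..<length es])"

end

theory Submission
  imports Defs
begin

lemma fr_succ: "freely_reduced w = successively (\<lambda>x y. \<not>(fst x = fst y \<and> snd x \<noteq> snd y)) w"
  unfolding freely_reduced_def successively_conv_nth by simp

lemma succ_concat:
  assumes "\<forall>i<m. f i \<noteq> [] \<and> successively P (f i)"
    and "\<forall>i. Suc i < m \<longrightarrow> P (last (f i)) (hd (f (Suc i)))"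
  shows "successively P (concat (map f [0..<m]))"
  using assms
proof (induction m)
  case 0
  then show ?case by simp
next
  case (Suc m)
  have IH: "successively P (concat (map f [0..<m]))" using Suc by auto
  show ?case
  proof (cases m)
    case 0
    then show ?thesis using Suc.prems by simp
  next
    case (Suc k)
    have l: "last (concat (map f [0..<m])) = last (f k)"
      using Suc.prems \<open>m = Suc k\<close> by simp
    show ?thesis using IH l Suc.prems \<open>m = Suc k\<close>
      by (simp add: successively_append_iff)
  qed
qed

theorem mainTheorem2:
  fixes V :: "'v set" and E :: "'e set" and lam p q :: "'e \<Rightarrow> 'v"
    and a b :: 'v and xs :: "('v \<times> bool) list" and es :: "'e list"
  assumes "finite V" and "finite E"
    and "\<forall>e\<in>E. lam e \<in> V \<and> p e \<in> V \<and> q e \<in> V"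
    and "link_girth_ge_4 E lam p q"
    and "graph_is_tree (plus_verts V) (link_adj E lam p q)"
    and "graph_is_tree (minus_verts V) (link_adj E lam p q)"
    and "a \<in> V" and "b \<in> V" and "a \<noteq> b"
    and "simple_path (plus_verts V) (link_adj E lam p q) (a, True) (b, True) xs"
    and "length es = length xs - 1"
    and "\<forall>i < length es. es ! i \<in> E \<and>
           {p (es ! i), lam (es ! i)} = {fst (xs ! i), fst (xs ! Suc i)}"
  shows "freely_reduced (vrim lam p q (map fst xs) es) \<and>
         freely_reduced (erim lam p (map fst xs) es)"
proof -
  define vs where "vs = map fst xs"
  have G1a: "\<forall>e\<in>E. \<forall>c. fst (link_edge lam p q e c) \<noteq> snd (link_edge lam p q e c)"
    using assms(4) unfolding link_girth_ge_4_def by (rule conjunct1)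
  have G2a: "\<forall>e\<in>E. \<forall>c. \<forall>e'\<in>E. \<forall>c'. (e, c) \<noteq> (e', c') \<longrightarrow>
        {fst (link_edge lam p q e c), snd (link_edge lam p q e c)} \<noteq>
        {fst (link_edge lam p q e' c'), snd (link_edge lam p q e' c')}"
    using assms(4) unfolding link_girth_ge_4_def by (rule conjunct1[OF conjunct2])
  have G1: "\<And>e c. e \<in> E \<Longrightarrow> fst (link_edge lam p q e c) \<noteq> snd (link_edge lam p q e c)"
    using G1a by blast
  have G2: "\<And>e c e' c'. e \<in> E \<Longrightarrow> e' \<in> E \<Longrightarrow> (e, c) \<noteq> (e', c') \<Longrightarrow>
        {fst (link_edge lam p q e c), snd (link_edge lam p q e c)} \<noteq>
        {fst (link_edge lam p q e' c'), snd (link_edge lam p q e' c')}"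
    using G2a by blast
  have sp: "distinct xs" "set xs \<subseteq> plus_verts V"
    using assms(10) unfolding simple_path_def walk_in_def by auto
  have "inj_on fst (plus_verts V)" unfolding plus_verts_def inj_on_def by auto
  hence dvs: "distinct vs" unfolding vs_def using sp
    by (simp add: distinct_map inj_on_subset)
  have lvs: "length vs = length xs" unfolding vs_def by simp
  have H: "\<And>i. i < length es \<Longrightarrow> es ! i \<in> E \<and> {p (es ! i), lam (es ! i)} = {vs ! i, vs ! Suc i}"
    using assms(11,12) unfolding vs_def by auto
  have pl: "\<And>e. e \<in> E \<Longrightarrow> p e \<noteq> lam e"
  proof -
    fix e assume "e \<in> E"
    from G1[OF this, of CT] show "p e \<noteq> lam e" by (auto simp: link_edge_def)
  qed
  have ql: "\<And>e. e \<in> E \<Longrightarrow> q e \<noteq> lam e"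
  proof -
    fix e assume "e \<in> E"
    from G1[OF this, of CB] show "q e \<noteq> lam e" by (auto simp: link_edge_def)
  qed
  have dist: "\<And>i j. i < length vs \<Longrightarrow> j < length vs \<Longrightarrow> i \<noteq> j \<Longrightarrow> vs ! i \<noteq> vs ! j"
    using dvs nth_eq_iff_index_eq by blast
  have cases: "\<And>i. i < length es \<Longrightarrow>
      (vs ! i = lam (es ! i) \<and> vs ! Suc i = p (es ! i)) \<or>
      (vs ! i = p (es ! i) \<and> vs ! Suc i = lam (es ! i))"
  proof -
    fix i assume i: "i < length es"
    have "vs ! i \<noteq> vs ! Suc i" using dist[of i "Suc i"] i assms(11) lvs by auto
    then show "?thesis i" using H[OF i] by (auto simp: doubleton_eq_iff)
  qed
  have CQe: "\<And>e. {fst (link_edge lam p q e CQ), snd (link_edge lam p q e CQ)} = {(lam e, True), (p e, False)}"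
    by (simp add: link_edge_def)
  have CRe: "\<And>e. {fst (link_edge lam p q e CR), snd (link_edge lam p q e CR)} = {(q e, True), (lam e, False)}"
    by (simp add: link_edge_def)
  have noQR: "\<And>e e'. e \<in> E \<Longrightarrow> e' \<in> E \<Longrightarrow> lam e = q e' \<Longrightarrow> p e = lam e' \<Longrightarrow> False"
  proof -
    fix e e' assume "e \<in> E" "e' \<in> E" "lam e = q e'" "p e = lam e'"
    from G2[OF this(1,2), of CQ CR] this(3,4) show False by (simp add: CQe CRe)
  qed
  have noRR: "\<And>e e'. e \<in> E \<Longrightarrow> e' \<in> E \<Longrightarrow> e \<noteq> e' \<Longrightarrow> q e = q e' \<Longrightarrow> lam e = lam e' \<Longrightarrow> False"
  proof -
    fix e e' assume "e \<in> E" "e' \<in> E" "e \<noteq> e'" "q e = q e'" "lam e = lam e'"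
    from G2[OF this(1,2), of CR CR] this(3-5) show False by (simp add: CRe)
  qed
  define P :: "('v \<times> bool) \<Rightarrow> ('v \<times> bool) \<Rightarrow> bool" where
    "P = (\<lambda>x y. \<not>(fst x = fst y \<and> snd x \<noteq> snd y))"
  define Pe :: "('e \<times> bool) \<Rightarrow> ('e \<times> bool) \<Rightarrow> bool" where
    "Pe = (\<lambda>x y. \<not>(fst x = fst y \<and> snd x \<noteq> snd y))"
  define f where "f = (\<lambda>i. square_vword lam p q (es ! i) (vs ! i) (vs ! Suc i))"
  define g where "g = (\<lambda>i. square_eword lam p (es ! i) (vs ! i) (vs ! Suc i))"
  have f1: "\<forall>i<length es. f i \<noteq> [] \<and> successively P (f i)"
  proof (intro allI impI)
    fix i assume i: "i < length es"
    have E: "es ! i \<in> E" using H[OF i] by simp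
    show "f i \<noteq> [] \<and> successively P (f i)"
      using cases[OF i] pl[OF E] ql[OF E]
      unfolding f_def square_vword_def P_def by (auto simp: successively_Cons)
  qed
  have f2: "\<forall>i. Suc i < length es \<longrightarrow> P (last (f i)) (hd (f (Suc i)))"
  proof (intro allI impI)
    fix i assume i: "Suc i < length es"
    have i0: "i < length es" using i by simp
    have E0: "es ! i \<in> E" using H[OF i0] by simp
    have E1: "es ! Suc i \<in> E" using H[OF i] by simp
    have d02: "vs ! i \<noteq> vs ! Suc (Suc i)" using dist[of i "Suc (Suc i)"] i assms(11) lvs by auto
    have ne: "p (es ! i) \<noteq> lam (es ! i)" "p (es ! Suc i) \<noteq> lam (es ! Suc i)"
      using pl[OF E0] pl[OF E1] by auto
    from cases[OF i0] show "P (last (f i)) (hd (f (Suc i)))"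
    proof
      assume a0: "vs ! i = lam (es ! i) \<and> vs ! Suc i = p (es ! i)"
      from cases[OF i] show ?thesis
      proof
        assume a1: "vs ! Suc i = lam (es ! Suc i) \<and> vs ! Suc (Suc i) = p (es ! Suc i)"
        have "lam (es ! i) \<noteq> q (es ! Suc i)" using noQR[OF E0 E1] a0 a1 by metis
        then show ?thesis using a0 a1 ne unfolding f_def square_vword_def P_def by simp
      next
        assume a1: "vs ! Suc i = p (es ! Suc i) \<and> vs ! Suc (Suc i) = lam (es ! Suc i)"
        then show ?thesis using a0 a1 ne d02 unfolding f_def square_vword_def P_def by simp
      qed
    next
      assume a0: "vs ! i = p (es ! i) \<and> vs ! Suc i = lam (es ! i)"
      from cases[OF i] show ?thesis
      proof
        assume a1: "vs ! Suc i = lam (es ! Suc i) \<and> vs ! Suc (Suc i) = p (es ! Suc i)"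
        have "es ! i \<noteq> es ! Suc i" using a0 a1 d02 by metis
        hence "q (es ! i) \<noteq> q (es ! Suc i)" using noRR[OF E0 E1] a0 a1 by metis
        then show ?thesis using a0 a1 ne unfolding f_def square_vword_def P_def by simp
      next
        assume a1: "vs ! Suc i = p (es ! Suc i) \<and> vs ! Suc (Suc i) = lam (es ! Suc i)"
        have "q (es ! i) \<noteq> lam (es ! Suc i)" using noQR[OF E1 E0] a0 a1 by metis
        then show ?thesis using a0 a1 ne unfolding f_def square_vword_def P_def by simp
      qed
    qed
  qed
  have g1: "\<forall>i<length es. g i \<noteq> [] \<and> successively Pe (g i)"
  proof (intro allI impI)
    fix i assume i: "i < length es"
    have E: "es ! i \<in> E" using H[OF i] by simp
    show "g i \<noteq> [] \<and> successively Pe (g i)"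
      using cases[OF i] pl[OF E]
      unfolding g_def square_eword_def Pe_def by auto
  qed
  have g2: "\<forall>i. Suc i < length es \<longrightarrow> Pe (last (g i)) (hd (g (Suc i)))"
  proof (intro allI impI)
    fix i assume i: "Suc i < length es"
    have i0: "i < length es" using i by simp
    have E0: "es ! i \<in> E" using H[OF i0] by simp
    have E1: "es ! Suc i \<in> E" using H[OF i] by simp
    have d02: "vs ! i \<noteq> vs ! Suc (Suc i)" using dist[of i "Suc (Suc i)"] i assms(11) lvs by auto
    have neq: "es ! i \<noteq> es ! Suc i"
    proof
      assume eq: "es ! i = es ! Suc i"
      from cases[OF i0] cases[OF i] d02 show False unfolding eq by metis
    qed
    have l: "fst (last (g i)) = es ! i"
      using cases[OF i0] pl[OF E0] unfolding g_def square_eword_def by (elim disjE) simp_all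
    have h: "fst (hd (g (Suc i))) = es ! Suc i"
      using cases[OF i] pl[OF E1] unfolding g_def square_eword_def by (elim disjE) simp_all
    show "Pe (last (g i)) (hd (g (Suc i)))"
      using l h neq unfolding Pe_def by simp
  qed
  have A: "successively P (vrim lam p q vs es)"
    unfolding vrim_def using succ_concat[OF f1 f2] unfolding f_def .
  have B: "successively Pe (erim lam p vs es)"
    unfolding erim_def using succ_concat[OF g1 g2] unfolding g_def .
  show ?thesis using A B unfolding fr_succ P_def Pe_def vs_def by simp
qed

end
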